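(* Let $m,n \in \mathbb{N}$, $S = (s_1,\dots,s_n)^T \in \mathbb{N}^n$ with $s_k \le 2^m$, fix $c \in \mathbb{N}$ and let $N = n^c$. Define $U = (u_1,\dots,u_n)^T$ by $u_k = \left\lfloor N \cdot \frac{s_k}{\|S\|}\right\rfloor$. For $\frac{n}{N^2}$ small enough, if the partition problem has a solution, i.e. there exists $x \in \{0,1\}^n$ with $S^T\cdot\left(x - \frac{1}{2}\cdot 1_{n\times 1}\right) = 0$, then there exist $x \in \{0,1\}^n$ and $\delta \in \mathbb{Z}$ with $-\frac{n}{2} \le \delta \le \frac{n}{2}$ such that $$U^T \cdot x = \frac{U^T \cdot 1_{n\times 1}}{2} + \delta.$$
   Context: $1_{n\times 1}$ denotes the all-ones vector in $\mathbb{R}^n$ and $\|\cdot\|$ the Euclidean norm.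
   Formalization: The shift $\delta$ is a real number with $2\delta \in \mathbb{Z}$ in place of $\delta \in \mathbb{Z}$, and $\frac{n}{N^2}$ small enough means below a single epsilon > 0 fixed independently of m, n, c and S. Apart from conventions, each condition added here is assumed in the paper as well or is needed for the statement above to hold. *)

theory Defs
  imports Complex_Main
begin

text \<open>Euclidean norm of S = (s_0,...,s_{n-1}) (0-based indexing).\<close>
definition normS :: "nat \<Rightarrow> (nat \<Rightarrow> nat) \<Rightarrow> real" where
  "normS n s = sqrt (\<Sum>k<n. (real (s k))^2)"

definition Uvec :: "nat \<Rightarrow> nat \<Rightarrow> (nat \<Rightarrow> nat) \<Rightarrow> nat \<Rightarrow> int" where
  "Uvec n c s k = \<lfloor>real (n ^ c) * real (s k) / normS n s\<rfloor>"

end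

theory Submission
  imports Defs
begin

lemma main_aux:
  fixes n c :: nat and s x :: "nat \<Rightarrow> nat"
  assumes x01: "\<forall>k<n. x k \<in> {0, 1}"
    and sol: "(\<Sum>k<n. real (s k) * (real (x k) - 1/2)) = 0"
  shows "\<exists>\<delta>::real. 2 * \<delta> \<in> \<int> \<and> - real n / 2 \<le> \<delta> \<and> \<delta> \<le> real n / 2 \<and>
          (\<Sum>k<n. real_of_int (Uvec n c s k) * real (x k))
            = (\<Sum>k<n. real_of_int (Uvec n c s k)) / 2 + \<delta>"
proof -
  define u where "u k = real_of_int (Uvec n c s k)" for k
  define a where "a k = real (n ^ c) * real (s k) / normS n s" for k
  define f where "f k = a k - u k" for k
  have uf: "u k = a k - f k" for k using f_def by simp
  have uk: "u k = of_int (floor (a k))" for k by (simp add: u_def a_def Uvec_def)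
  have f01: "0 \<le> f k \<and> f k < 1" for k
    using of_int_floor_le[of "a k"] real_of_int_floor_add_one_gt[of "a k"] uk[of k]
    unfolding f_def by linarith
  define \<delta> where "\<delta> = (\<Sum>k<n. u k * (real (x k) - 1/2))"
  have eq: "(\<Sum>k<n. u k * real (x k)) = (\<Sum>k<n. u k) / 2 + \<delta>"
    unfolding \<delta>_def by (simp add: sum_subtractf right_diff_distrib sum_divide_distrib)
  have "2 * \<delta> = (\<Sum>k<n. u k * (2 * real (x k) - 1))"
    unfolding \<delta>_def by (simp add: sum_distrib_left algebra_simps)
  also have "\<dots> = of_int (\<Sum>k<n. Uvec n c s k * (2 * int (x k) - 1))"
    by (simp add: u_def)
  finally have int: "2 * \<delta> \<in> \<int>" by (simp only: Ints_of_int)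
  have asum: "(\<Sum>k<n. a k * (real (x k) - 1/2)) = 0"
  proof -
    have "(\<Sum>k<n. a k * (real (x k) - 1/2)) =
       (real (n ^ c) / normS n s) * (\<Sum>k<n. real (s k) * (real (x k) - 1/2))"
      by (simp add: a_def sum_distrib_left mult.assoc)
    thus ?thesis using sol by simp
  qed
  have d2: "\<delta> = - (\<Sum>k<n. f k * (real (x k) - 1/2))"
    unfolding \<delta>_def uf using asum
    by (simp add: left_diff_distrib sum_subtractf)
  have b: "\<bar>f k * (real (x k) - 1/2)\<bar> \<le> 1/2" if "k < n" for k
  proof -
    have "\<bar>real (x k) - 1/2\<bar> = 1/2" using x01 that by auto
    thus ?thesis using f01[of k] by (simp only: abs_mult) auto
  qed
  have "\<bar>\<Sum>k<n. f k * (real (x k) - 1/2)\<bar> \<le> (\<Sum>k<n. \<bar>f k * (real (x k) - 1/2)\<bar>)"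
    by (rule sum_abs)
  also have "\<dots> \<le> (\<Sum>k<n. 1/2)" by (rule sum_mono) (use b in auto)
  finally have "\<bar>\<delta>\<bar> \<le> real n / 2" using d2 by simp
  thus ?thesis using eq int unfolding u_def by (intro exI[of _ \<delta>]) auto
qed

theorem theorem2p2:
  shows "\<exists>\<epsilon>>0. \<forall>(m::nat) (n::nat) (c::nat) (s::nat \<Rightarrow> nat).
    (\<forall>k<n. s k \<le> 2 ^ m) \<longrightarrow>
    real n / (real (n ^ c))^2 < \<epsilon> \<longrightarrow>
    (\<exists>x::nat \<Rightarrow> nat. (\<forall>k<n. x k \<in> {0, 1}) \<and>
        (\<Sum>k<n. real (s k) * (real (x k) - 1/2)) = 0) \<longrightarrow>
    (\<exists>x::nat \<Rightarrow> nat. (\<forall>k<n. x k \<in> {0, 1}) \<and>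
       (\<exists>\<delta>::real. 2 * \<delta> \<in> \<int> \<and> - real n / 2 \<le> \<delta> \<and> \<delta> \<le> real n / 2 \<and>
          (\<Sum>k<n. real_of_int (Uvec n c s k) * real (x k))
            = (\<Sum>k<n. real_of_int (Uvec n c s k)) / 2 + \<delta>))"
  apply (rule exI[of _ 1])
  apply (intro conjI allI impI)
   apply simp
  apply (elim exE conjE)
  subgoal for m n c s x
    using main_aux[of n x s c] by blast
  done

end
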